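(* Let $G$ be a second countable locally compact abelian group, let $\varLambda\subseteq\varGamma\subseteq G$ be uniformly discrete point sets, and let $\mathcal{A}=(A_n)_n$ be a van Hove sequence such that: (a) $\varLambda\cap A_n$ is eventually nonempty; (b) the counting autocorrelation $\gamma_{\mathrm{count},\varLambda}$ of $\varLambda$ exists with respect to $\mathcal{A}$; (c) $\lim_{n\to\infty}\frac{\mathrm{card}(\varLambda\cap A_n)}{\mathrm{card}(\varGamma\cap A_n)}=1$. Then the counting autocorrelation $\gamma_{\mathrm{count},\varGamma}$ of $\varGamma$ exists with respect to $\mathcal{A}$ and $\gamma_{\mathrm{count},\varGamma}=\gamma_{\mathrm{count},\varLambda}$.
   Context: Uniformly discrete: there is a nonempty open $U$ such that each translate $t+U$ contains at most one point of the set. A van Hove sequence is a sequence of compact sets $A_n$ of positive Haar measure with $\mathrm{vol}(\partial^K A_n)/\mathrm{vol}(A_n)\to0$ for all compact $K$, where $\partial^K A=((A+K)\setminus A^\circ)\cup((\overline{G\setminus A}-K)\cap A)$. For finite $F$, $\gamma_F=\frac{1}{\mathrm{card}(F)}\sum_{x,y\in F}\delta_{x-y}$ if $F\ne\emptyset$, $\gamma_\emptyset=0$; the counting autocorrelation of $X$ is the vague limit of $\gamma_{X\cap A_n}$. *)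

theory Defs
  imports "HOL-Analysis.Analysis"
begin

definition haar_measure :: "'a::{topological_ab_group_add} measure \<Rightarrow> bool" where
  "haar_measure \<mu> \<longleftrightarrow>
     sets \<mu> = sets borel \<and>
     (\<forall>K. compact K \<longrightarrow> emeasure \<mu> K < \<infinity>) \<and>
     (\<forall>U. open U \<and> U \<noteq> {} \<longrightarrow> emeasure \<mu> U > 0) \<and>
     (\<forall>t. \<forall>B\<in>sets borel. emeasure \<mu> ((\<lambda>x. t + x) ` B) = emeasure \<mu> B) \<and>
     (\<forall>B\<in>sets borel. emeasure \<mu> B = (INF U\<in>{U. open U \<and> B \<subseteq> U}. emeasure \<mu> U)) \<and>
     (\<forall>U. open U \<longrightarrow> emeasure \<mu> U = (SUP K\<in>{K. compact K \<and> K \<subseteq> U}. emeasure \<mu> K))"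

definition kbdry :: "'a::{topological_ab_group_add} set \<Rightarrow> 'a set \<Rightarrow> 'a set" where
  "kbdry K A = ({a + k | a k. a \<in> A \<and> k \<in> K} - interior A)
              \<union> ({b - k | b k. b \<in> closure (UNIV - A) \<and> k \<in> K} \<inter> A)"

definition van_hove :: "'a::{topological_ab_group_add} measure \<Rightarrow> (nat \<Rightarrow> 'a set) \<Rightarrow> bool" where
  "van_hove \<mu> A \<longleftrightarrow>
     (\<forall>n. compact (A n) \<and> measure \<mu> (A n) > 0) \<and>
     (\<forall>K. compact K \<longrightarrow> (\<lambda>n. measure \<mu> (kbdry K (A n)) / measure \<mu> (A n)) \<longlonglongrightarrow> 0)"

definition uniformly_discrete :: "'a::{topological_ab_group_add} set \<Rightarrow> bool" where
  "uniformly_discrete X \<longleftrightarrow>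
     (\<exists>U. open U \<and> U \<noteq> {} \<and>
        (\<forall>t x y. x \<in> X \<and> y \<in> X \<and> x \<in> (\<lambda>u. t + u) ` U \<and> y \<in> (\<lambda>u. t + u) ` U \<longrightarrow> x = y))"

definition Cc :: "('a::topological_space \<Rightarrow> complex) \<Rightarrow> bool" where
  "Cc f \<longleftrightarrow> continuous_on UNIV f \<and> compact (closure {x. f x \<noteq> 0})"

(* integral of f against gamma_F = (1/card F) sum_{x,y in F} delta_{x-y}, gamma_{empty} = 0 *)
definition gamma_fin_integral :: "'a::ab_group_add set \<Rightarrow> ('a \<Rightarrow> complex) \<Rightarrow> complex" where
  "gamma_fin_integral F f =
     (if F = {} then 0 else (1 / of_nat (card F)) * (\<Sum>x\<in>F. \<Sum>y\<in>F. f (x - y)))"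

definition counting_autocorrelation ::
  "'a::{topological_ab_group_add} set \<Rightarrow> (nat \<Rightarrow> 'a set) \<Rightarrow> 'a measure \<Rightarrow> bool" where
  "counting_autocorrelation X A \<gamma> \<longleftrightarrow>
     sets \<gamma> = sets borel \<and>
     (\<forall>K. compact K \<longrightarrow> emeasure \<gamma> K < \<infinity>) \<and>
     (\<forall>f. Cc f \<longrightarrow> (\<lambda>n. gamma_fin_integral (X \<inter> A n) f) \<longlonglongrightarrow> integral\<^sup>L \<gamma> f)"

end

theory Submission
  imports Defs
begin

lemma open_transl:
  fixes U :: "'a::topological_ab_group_add set"
  assumes "open U"
  shows "open ((\<lambda>u. c + u) ` U)"
proof -
  have eq: "(\<lambda>u. c + u) ` U = (\<lambda>x. x - c) -` U"
  proof
    show "(\<lambda>u. c + u) ` U \<subseteq> (\<lambda>x. x - c) -` U" by auto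
    show "(\<lambda>x. x - c) -` U \<subseteq> (\<lambda>u. c + u) ` U"
    proof
      fix x assume "x \<in> (\<lambda>x. x - c) -` U"
      then have "x - c \<in> U" by simp
      moreover have "x = c + (x - c)" by simp
      ultimately show "x \<in> (\<lambda>u. c + u) ` U" by (rule rev_image_eqI)
    qed
  qed
  have "continuous_on UNIV (\<lambda>x::'a. x - c)" by (intro continuous_intros)
  then show ?thesis unfolding eq using assms open_vimage by blast
qed

lemma ud_bound:
  fixes X K :: "'a::topological_ab_group_add set"
  assumes "uniformly_discrete X" "compact K"
  shows "\<exists>C. \<forall>z. finite (X \<inter> (\<lambda>k. z + k) ` K) \<and> card (X \<inter> (\<lambda>k. z + k) ` K) \<le> C"
proof -
  obtain U where U: "open U" "U \<noteq> {}"
    "\<And>t x y. x\<in>X \<Longrightarrow> y\<in>X \<Longrightarrow> x \<in> (\<lambda>u. t+u)`U \<Longrightarrow> y \<in> (\<lambda>u. t+u)`U \<Longrightarrow> x = y"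
    using assms(1) unfolding uniformly_discrete_def by blast
  obtain u0 where u0: "u0 \<in> U" using U(2) by blast
  have cov: "K \<subseteq> (\<Union>k\<in>K. (\<lambda>u. (k - u0) + u) ` U)"
  proof
    fix k assume "k \<in> K"
    moreover have "k \<in> (\<lambda>u. (k - u0) + u) ` U"
      by (rule rev_image_eqI[OF u0]) simp
    ultimately show "k \<in> (\<Union>k\<in>K. (\<lambda>u. (k - u0) + u) ` U)" by blast
  qed
  obtain T where T: "T \<subseteq> K" "finite T" "K \<subseteq> (\<Union>k\<in>T. (\<lambda>u. (k - u0) + u) ` U)"
    by (rule compactE_image[OF assms(2) _ cov]) (use open_transl[OF U(1)] in auto)
  show ?thesis
  proof (intro exI[of _ "card T"] allI conjI)
    fix z
    let ?S = "X \<inter> (\<lambda>k. z + k) ` K"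
    define h where "h y = (SOME k. k \<in> T \<and> y \<in> (\<lambda>u. (z + (k - u0)) + u) ` U)" for y
    have h: "h y \<in> T \<and> y \<in> (\<lambda>u. (z + (h y - u0)) + u) ` U" if "y \<in> ?S" for y
    proof -
      from that obtain k where k: "k\<in>K" "y = z + k" by auto
      then obtain k' u where ku: "k'\<in>T" "u\<in>U" "k = (k'-u0)+u" using T(3) by blast
      have "y \<in> (\<lambda>u. (z + (k' - u0)) + u) ` U"
        by (rule rev_image_eqI[OF ku(2)]) (simp add: k(2) ku(3) add.assoc)
      then have "\<exists>k. k \<in> T \<and> y \<in> (\<lambda>u. (z + (k - u0)) + u) ` U" using ku(1) by blast
      then show ?thesis unfolding h_def by (rule someI_ex)
    qed
    have inj: "inj_on h ?S"
    proof (rule inj_onI)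
      fix y1 y2 assume y: "y1 \<in> ?S" "y2 \<in> ?S" "h y1 = h y2"
      show "y1 = y2"
        by (rule U(3)[of y1 y2 "z + (h y1 - u0)"]) (use y h[OF y(1)] h[OF y(2)] in auto)
    qed
    have im: "h ` ?S \<subseteq> T" using h by blast
    show "finite ?S" using finite_imageD[OF finite_subset[OF im T(2)] inj] .
    show "card ?S \<le> card T" by (rule card_inj_on_le[OF inj im T(2)])
  qed
qed

lemma sum_norm_bound:
  fixes g :: "'a \<Rightarrow> complex"
  assumes "finite H" "H \<subseteq> X" "finite (X \<inter> W)" "card (X \<inter> W) \<le> C"
    "\<And>y. g y \<noteq> 0 \<Longrightarrow> y \<in> W" "\<And>y. norm (g y) \<le> M"
  shows "(\<Sum>y\<in>H. norm (g y)) \<le> M * real C"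
proof -
  have M0: "0 \<le> M" using assms(6)[of undefined] norm_ge_zero[of "g undefined"] by linarith
  have "(\<Sum>y\<in>H. norm (g y)) = (\<Sum>y\<in>H \<inter> W. norm (g y))"
    by (rule sum.mono_neutral_right) (use assms in auto)
  also have "\<dots> \<le> (\<Sum>y\<in>H \<inter> W. M)" by (rule sum_mono) (use assms in auto)
  also have "\<dots> = M * real (card (H \<inter> W))" by simp
  also have "\<dots> \<le> M * real C"
  proof -
    have "card (H \<inter> W) \<le> card (X \<inter> W)" by (rule card_mono[OF assms(3)]) (use assms(2) in auto)
    then show ?thesis using assms(4) M0 by (simp add: mult_left_mono)
  qed
  finally show ?thesis .
qed

theorem lemma3p19:
  fixes \<mu> :: "'a::{topological_ab_group_add, second_countable_topology, t2_space} measure"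
    and \<Lambda> \<Gamma> :: "'a set" and A :: "nat \<Rightarrow> 'a set" and \<gamma> :: "'a measure"
  assumes "locally_compact_space (euclidean :: 'a topology)"
    and "haar_measure \<mu>"
    and "\<Lambda> \<subseteq> \<Gamma>" and "uniformly_discrete \<Lambda>" and "uniformly_discrete \<Gamma>"
    and "van_hove \<mu> A"
    and "eventually (\<lambda>n. \<Lambda> \<inter> A n \<noteq> {}) sequentially"
    and "counting_autocorrelation \<Lambda> A \<gamma>"
    and "(\<lambda>n. real (card (\<Lambda> \<inter> A n)) / real (card (\<Gamma> \<inter> A n))) \<longlonglongrightarrow> 1"
  shows "counting_autocorrelation \<Gamma> A \<gamma>"
proof -
  have g1: "sets \<gamma> = sets borel" and g2: "\<forall>K. compact K \<longrightarrow> emeasure \<gamma> K < \<infinity>"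
    and g3: "\<And>f. Cc f \<Longrightarrow> (\<lambda>n. gamma_fin_integral (\<Lambda> \<inter> A n) f) \<longlonglongrightarrow> integral\<^sup>L \<gamma> f"
    using assms(8) unfolding counting_autocorrelation_def by auto
  have finH: "finite (\<Gamma> \<inter> A n)" for n
  proof -
    have "compact (A n)" using assms(6) unfolding van_hove_def by auto
    then obtain C where "\<forall>z. finite (\<Gamma> \<inter> (\<lambda>k. z + k) ` A n) \<and> card (\<Gamma> \<inter> (\<lambda>k. z + k) ` A n) \<le> C"
      using ud_bound[OF assms(5)] by blast
    then have "finite (\<Gamma> \<inter> (\<lambda>k. 0 + k) ` A n)" by blast
    then show ?thesis by simp
  qed
  have "(\<lambda>n. gamma_fin_integral (\<Gamma> \<inter> A n) f) \<longlonglongrightarrow> integral\<^sup>L \<gamma> f" if Cf: "Cc f" for f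
  proof -
    define S where "S = closure {x. f x \<noteq> 0}"
    have cS: "compact S" and contf: "continuous_on UNIV f" using Cf unfolding Cc_def S_def by auto
    have fz: "f x = 0" if "x \<notin> S" for x using that closure_subset[of "{x. f x \<noteq> 0}"] unfolding S_def by auto
    have "compact (f ` S)" by (rule compact_continuous_image[OF continuous_on_subset[OF contf] cS]) auto
    then obtain B where B: "\<forall>y\<in>f ` S. norm y \<le> B" using compact_imp_bounded bounded_iff by metis
    define M where "M = max B 0"
    have M: "norm (f x) \<le> M" for x
      using B fz[of x] unfolding M_def by (cases "x \<in> S") auto
    have cS': "compact ((\<lambda>x. - x) ` S)"
      by (rule compact_continuous_image[OF _ cS]) (intro continuous_intros)
    obtain C1 where C1: "\<And>z. finite (\<Gamma> \<inter> (\<lambda>k. z + k) ` ((\<lambda>x. - x) ` S)) \<and> card (\<Gamma> \<inter> (\<lambda>k. z + k) ` ((\<lambda>x. - x) ` S)) \<le> C1"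
      using ud_bound[OF assms(5) cS'] by blast
    obtain C2 where C2: "\<And>z. finite (\<Gamma> \<inter> (\<lambda>k. z + k) ` S) \<and> card (\<Gamma> \<inter> (\<lambda>k. z + k) ` S) \<le> C2"
      using ud_bound[OF assms(5) cS] by blast
    have B1: "(\<Sum>y\<in>H. norm (f (x - y))) \<le> M * real C1" if "finite H" "H \<subseteq> \<Gamma>" for H x
    proof (rule sum_norm_bound[OF that C1[THEN conjunct1] C1[THEN conjunct2]])
      fix y assume "f (x - y) \<noteq> 0"
      then have "x - y \<in> S" using fz by blast
      then have "- (x - y) \<in> (\<lambda>x. - x) ` S" by blast
      moreover have "y = x + (- (x - y))" by simp
      ultimately show "y \<in> (\<lambda>k. x + k) ` ((\<lambda>x. - x) ` S)" by (rule rev_image_eqI)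
    qed (rule M)
    have B2: "(\<Sum>x\<in>H. norm (f (x - y))) \<le> M * real C2" if "finite H" "H \<subseteq> \<Gamma>" for H y
    proof (rule sum_norm_bound[OF that C2[THEN conjunct1] C2[THEN conjunct2]])
      fix x assume "f (x - y) \<noteq> 0"
      then have "x - y \<in> S" using fz by blast
      moreover have "x = y + (x - y)" by simp
      ultimately show "x \<in> (\<lambda>k. y + k) ` S" by (rule rev_image_eqI)
    qed (rule M)
    define F where "F n = \<Lambda> \<inter> A n" for n
    define H where "H n = \<Gamma> \<inter> A n" for n
    define r where "r n = real (card (F n)) / real (card (H n))" for n
    have lim: "(\<lambda>n. gamma_fin_integral (F n) f) \<longlonglongrightarrow> integral\<^sup>L \<gamma> f"
      unfolding F_def by (rule g3[OF Cf])
    have rlim: "r \<longlonglongrightarrow> 1" unfolding r_def F_def H_def by (rule assms(9))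
    have ev: "eventually (\<lambda>n. norm (gamma_fin_integral (H n) f - gamma_fin_integral (F n) f)
              \<le> M * real (C1 + C2) * (1 - r n) + norm (gamma_fin_integral (F n) f) * \<bar>r n - 1\<bar>) sequentially"
      using assms(7)
    proof eventually_elim
      case (elim n)
      have Fne: "F n \<noteq> {}" using elim unfolding F_def .
      have FH: "F n \<subseteq> H n" using assms(3) unfolding F_def H_def by auto
      have fH: "finite (H n)" unfolding H_def by (rule finH)
      have fF: "finite (F n)" using finite_subset[OF FH fH] .
      have HG: "H n \<subseteq> \<Gamma>" and FG: "F n \<subseteq> \<Gamma>" using FH unfolding H_def by auto
      define a where "a = card (F n)"
      define b where "b = card (H n)"
      have a0: "a > 0" unfolding a_def using Fne fF by (simp add: card_gt_0_iff)
      have ab: "a \<le> b" unfolding a_def b_def by (rule card_mono[OF fH FH])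
      have Hne: "H n \<noteq> {}" using Fne FH by blast
      define P where "P = (\<Sum>x\<in>F n. \<Sum>y\<in>F n. f (x - y))"
      define Q where "Q = (\<Sum>x\<in>H n. \<Sum>y\<in>H n. f (x - y))"
      define D1 where "D1 = (\<Sum>x\<in>H n - F n. \<Sum>y\<in>H n. f (x - y))"
      define D2 where "D2 = (\<Sum>x\<in>F n. \<Sum>y\<in>H n - F n. f (x - y))"
      have QP: "Q = P + D1 + D2"
      proof -
        have "Q = D1 + (\<Sum>x\<in>F n. \<Sum>y\<in>H n. f (x - y))"
          unfolding Q_def D1_def by (rule sum.subset_diff[OF FH fH])
        also have "(\<Sum>x\<in>F n. \<Sum>y\<in>H n. f (x - y)) = (\<Sum>x\<in>F n. (\<Sum>y\<in>H n - F n. f (x - y)) + (\<Sum>y\<in>F n. f (x - y)))"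
          by (rule sum.cong[OF refl]) (rule sum.subset_diff[OF FH fH])
        also have "\<dots> = D2 + P" unfolding D2_def P_def by (simp add: sum.distrib)
        finally show ?thesis by simp
      qed
      have cd: "real (card (H n - F n)) = real b - real a"
        unfolding a_def b_def using card_Diff_subset[OF fF FH] card_mono[OF fH FH] by simp
      have nD1: "norm D1 \<le> (real b - real a) * (M * real C1)"
      proof -
        have "norm D1 \<le> (\<Sum>x\<in>H n - F n. norm (\<Sum>y\<in>H n. f (x - y)))" unfolding D1_def by (rule norm_sum)
        also have "\<dots> \<le> (\<Sum>x\<in>H n - F n. M * real C1)"
        proof (rule sum_mono)
          fix x show "norm (\<Sum>y\<in>H n. f (x - y)) \<le> M * real C1"
            using norm_sum[of "\<lambda>y. f (x - y)" "H n"] B1[OF fH HG, of x] by linarith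
        qed
        finally show ?thesis using cd by simp
      qed
      have nD2: "norm D2 \<le> (real b - real a) * (M * real C2)"
      proof -
        have "D2 = (\<Sum>y\<in>H n - F n. \<Sum>x\<in>F n. f (x - y))" unfolding D2_def by (rule sum.swap)
        then have "norm D2 \<le> (\<Sum>y\<in>H n - F n. norm (\<Sum>x\<in>F n. f (x - y)))" by (simp add: norm_sum)
        also have "\<dots> \<le> (\<Sum>y\<in>H n - F n. M * real C2)"
        proof (rule sum_mono)
          fix y show "norm (\<Sum>x\<in>F n. f (x - y)) \<le> M * real C2"
            using norm_sum[of "\<lambda>x. f (x - y)" "F n"] B2[OF fF FG, of y] by linarith
        qed
        finally show ?thesis using cd by simp
      qed
      have gF: "gamma_fin_integral (F n) f = P / of_nat a"
        unfolding gamma_fin_integral_def P_def a_def using Fne by simp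
      have gH: "gamma_fin_integral (H n) f = Q / of_nat b"
        unfolding gamma_fin_integral_def Q_def b_def using Hne by simp
      have rn: "r n = real a / real b" unfolding r_def a_def b_def ..
      have b0: "real b > 0" using a0 ab by simp
      have diff: "gamma_fin_integral (H n) f - gamma_fin_integral (F n) f
          = (D1 + D2) / of_nat b + gamma_fin_integral (F n) f * of_real (r n - 1)"
        unfolding gF gH QP rn using a0 b0 by (simp add: field_simps)
      have "norm ((D1 + D2) / of_nat b) = norm (D1 + D2) / real b"
        by (simp add: norm_divide)
      also have "\<dots> \<le> ((real b - real a) * (M * real (C1 + C2))) / real b"
        using norm_triangle_ineq[of D1 D2] nD1 nD2 b0 by (intro divide_right_mono) (auto simp: algebra_simps)
      also have "\<dots> = M * real (C1 + C2) * (1 - r n)" unfolding rn using b0 by (simp add: field_simps)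
      finally have t1: "norm ((D1 + D2) / of_nat b) \<le> M * real (C1 + C2) * (1 - r n)" .
      have t2: "norm (gamma_fin_integral (F n) f * of_real (r n - 1)) = norm (gamma_fin_integral (F n) f) * \<bar>r n - 1\<bar>"
        by (simp only: norm_mult norm_of_real)
      show ?case unfolding diff using norm_triangle_ineq[of "(D1 + D2) / of_nat b" "gamma_fin_integral (F n) f * of_real (r n - 1)"] t1 t2
        by linarith
    qed
    have "(\<lambda>n. M * real (C1 + C2) * (1 - r n) + norm (gamma_fin_integral (F n) f) * \<bar>r n - 1\<bar>) \<longlonglongrightarrow>
           M * real (C1 + C2) * (1 - 1) + norm (integral\<^sup>L \<gamma> f) * \<bar>1 - 1\<bar>"
      by (intro tendsto_intros rlim lim)
    then have "(\<lambda>n. gamma_fin_integral (H n) f - gamma_fin_integral (F n) f) \<longlonglongrightarrow> 0"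
      by (intro Lim_null_comparison[OF ev]) simp
    from tendsto_add[OF this lim] show ?thesis unfolding H_def by simp
  qed
  then show ?thesis unfolding counting_autocorrelation_def using g1 g2 by auto
qed

end
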